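(* Let $G=(N,T,F,P,S)$ be a grounded indexed grammar, let $D$ be a derivation tree of $G$ for a string $s$ with some set of marked positions, and let $H=(v_0,\dots,v_m)$ be a path in $D$ from the root to a leaf (excluding the leaf) containing more than $(|N|\cdot 3^{|N|})^{|N|^2\cdot 3^{|N|}+1}$ branch nodes. Then there are indices $0\le b_1<t_1<t_2\le b_2\le m$ such that: $\sigma(v_{b_1})=\sigma(v_{t_1})$ and $\sigma(v_{t_2})=\sigma(v_{b_2})$; $v_{b_2}\in\beta(v_{b_1})$ and $v_{t_2}\in\beta(v_{t_1})$; $\tau(v_{b_1})=\tau(v_{t_1})$; and there is a branch node among $v_{b_1},\dots,v_{t_1-1}$ or among $v_{t_2},\dots,v_{b_2-1}$.
   Context: An indexed grammar $G=(N,T,F,P,S)$ has finite alphabets $N$ (nonterminals), $T$ (terminals), $F$ (stack symbols), start symbol $S\in N$, and productions of the forms $A\to r$, $A\to Bf$, $Af\to r$ ($A,B\in N$, $f\in F$, $r\in(N\cup T)^*$); a nonterminal carries a stack $x\in F^*$ (written $Ax$, first symbol of $x$ on top), and for $r\in(N\cup T)^*$, $r\{x\}$ is $r$ with each nonterminal $A$ replaced by $Ax$. Applying $A\to r$ to $Ax$ gives $r\{x\}$; applying $A\to Bf$ to $Ax$ gives $Bfx$; applying $Af\to r$ to $Afy$ gives $r\{y\}$. $G$ is grounded if there is $\$\in F$ such that every production has one of the forms $S\to A\$$, $A\to r$, $A\to Bf$, $Af\to r$, $A\$\to s$ with $A,B\in N\setminus\{S\}$, $f\in F\setminus\{\$\}$,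 $r\in(N\setminus\{S\})^+$, $s\in T^*$. A derivation tree $D$ for $s\in T^*$ is an ordered rooted tree whose internal nodes are labelled in $NF^*$ and whose leaves are labelled in $T^*$; the root is labelled $S$ (empty stack); each internal node labelled $Ax$ has as children, in order, the result of applying one production of $G$ to $Ax$ (internal children labelled by the nonterminals-with-stacks produced, or, for a production $A\$\to s'$ with $x=\$$, a single leaf labelled $s'$); the concatenation of leaf labels from left to right is $s$. Given a set of marked positions of $s$: a leaf is marked if its label contains a marked position of $s$; an internal node is marked if it has a marked descendant; a branch node is a node with more than one marked child. A path is a list of nodes $(v_0,\dots,v_m)$, $m\ge 0$, with $v_i$ a child of $v_{i-1}$. For an internal node $v$ labelled $Ax$: $\sigma(v)=A$ and $\eta(v)=|x|$. A node $v'$ is in the scope of $v$ iff $v'$ is internal and there is a path from $v$ to $v'$ all of whose nodes $v''$ (including $v'$) satisfy $\eta(v'')\ge\eta(v)$. $\beta(v)$ is the set of nodes $v'$ in the scope of $v$ such that no child of $v'$ is in the scope of $v$. $\tau(v)$ is the triple $(\tau_1,\tau_2,\tau_3)$ where $\tau_1=\{A\in N:\sigma(v')\neq A$ for all $v'\in\beta(v)\}$, $\tau_2=\{A\in N:\sigma(v')=A$ for some $v'\in\beta(v)$ and $\sigma(v')\ne A$ for all marked $v'\in\beta(v)\}$, $\tau_3=\{A\in N:\sigma(v')=A$ for some marked $v'\in\beta(v)\}$. *)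

theory Defs
  imports Main
begin

text \<open>PRule A r   is  A -> r        (r in (N u T)^*)
  PPush A B f is  A -> B f
  PPop A f r  is  A f -> r      (r in (N u T)^*)\<close>
datatype ('n, 't, 'f) production =
    PRule 'n "('n + 't) list"
  | PPush 'n 'n 'f
  | PPop 'n 'f "('n + 't) list"

record ('n, 't, 'f) igrammar =
  nts   :: "'n set"
  terms :: "'t set"
  stks  :: "'f set"
  prods :: "('n, 't, 'f) production set"
  start :: 'n

definition rhs_ok :: "('n, 't, 'f) igrammar \<Rightarrow> ('n + 't) list \<Rightarrow> bool" where
  "rhs_ok G r \<longleftrightarrow> (\<forall>z\<in>set r. case z of Inl A \<Rightarrow> A \<in> nts G | Inr a \<Rightarrow> a \<in> terms G)"

fun prod_ok :: "('n, 't, 'f) igrammar \<Rightarrow> ('n, 't, 'f) production \<Rightarrow> bool" where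
  "prod_ok G (PRule A r) \<longleftrightarrow> A \<in> nts G \<and> rhs_ok G r"
| "prod_ok G (PPush A B f) \<longleftrightarrow> A \<in> nts G \<and> B \<in> nts G \<and> f \<in> stks G"
| "prod_ok G (PPop A f r) \<longleftrightarrow> A \<in> nts G \<and> f \<in> stks G \<and> rhs_ok G r"

definition igrammar :: "('n, 't, 'f) igrammar \<Rightarrow> bool" where
  "igrammar G \<longleftrightarrow> finite (nts G) \<and> finite (terms G) \<and> finite (stks G) \<and> finite (prods G)
     \<and> start G \<in> nts G \<and> (\<forall>p\<in>prods G. prod_ok G p)"

text \<open>Grounded with bottom symbol d (the paper's dollar).\<close>
definition grounded_with :: "('n, 't, 'f) igrammar \<Rightarrow> 'f \<Rightarrow> bool" where
  "grounded_with G d \<longleftrightarrow> d \<in> stks G \<and> (\<forall>p\<in>prods G.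
      (\<exists>A. A \<in> nts G - {start G} \<and> p = PPush (start G) A d)
    \<or> (\<exists>A bs. A \<in> nts G - {start G} \<and> bs \<noteq> [] \<and> set bs \<subseteq> nts G - {start G} \<and> p = PRule A (map Inl bs))
    \<or> (\<exists>A B f. A \<in> nts G - {start G} \<and> B \<in> nts G - {start G} \<and> f \<in> stks G - {d} \<and> p = PPush A B f)
    \<or> (\<exists>A f bs. A \<in> nts G - {start G} \<and> f \<in> stks G - {d} \<and> bs \<noteq> [] \<and> set bs \<subseteq> nts G - {start G}
         \<and> p = PPop A f (map Inl bs))
    \<or> (\<exists>A w. A \<in> nts G - {start G} \<and> set w \<subseteq> terms G \<and> p = PPop A d (map Inr w)))"

definition grounded :: "('n, 't, 'f) igrammar \<Rightarrow> bool" where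
  "grounded G \<longleftrightarrow> (\<exists>d. grounded_with G d)"

text \<open>Internal nodes are labelled A x (nonterminal with stack, head of list = top); leaves by strings.\<close>
datatype ('n, 't, 'f) dtree = Node 'n "'f list" "('n, 't, 'f) dtree list" | Leaf "'t list"

fun lab :: "('n, 't, 'f) dtree \<Rightarrow> ('n \<times> 'f list) + 't list" where
  "lab (Node A x cs) = Inl (A, x)"
| "lab (Leaf w) = Inr w"

text \<open>The children cs of a node labelled A x are the result of applying production p.
  Applying A f -> s with s in T^* to A [f] yields a single leaf labelled s
  (in grounded grammars this is exactly the A dollar -> s case).\<close>
fun applies :: "('n, 't, 'f) production \<Rightarrow> 'n \<Rightarrow> 'f list \<Rightarrow> ('n, 't, 'f) dtree list \<Rightarrow> bool" where
  "applies (PRule B r) A x cs \<longleftrightarrow> B = A \<and>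
      (\<exists>bs. r = map Inl bs \<and> map lab cs = map (\<lambda>C. Inl (C, x)) bs)"
| "applies (PPush B C f) A x cs \<longleftrightarrow> B = A \<and> map lab cs = [Inl (C, f # x)]"
| "applies (PPop B f r) A x cs \<longleftrightarrow> B = A \<and>
      ((\<exists>y bs. x = f # y \<and> bs \<noteq> [] \<and> r = map Inl bs \<and> map lab cs = map (\<lambda>C. Inl (C, y)) bs)
     \<or> (\<exists>w. x = [f] \<and> r = map Inr w \<and> map lab cs = [Inr w]))"

fun valid_tree :: "('n, 't, 'f) igrammar \<Rightarrow> ('n, 't, 'f) dtree \<Rightarrow> bool" where
  "valid_tree G (Node A x cs) \<longleftrightarrow> (\<exists>p\<in>prods G. applies p A x cs) \<and> (\<forall>c\<in>set cs. valid_tree G c)"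
| "valid_tree G (Leaf w) \<longleftrightarrow> True"

fun yield :: "('n, 't, 'f) dtree \<Rightarrow> 't list" where
  "yield (Leaf w) = w"
| "yield (Node A x cs) = concat (map yield cs)"

definition deriv_tree :: "('n, 't, 'f) igrammar \<Rightarrow> ('n, 't, 'f) dtree \<Rightarrow> 't list \<Rightarrow> bool" where
  "deriv_tree G D s \<longleftrightarrow> (\<exists>cs. D = Node (start G) [] cs) \<and> valid_tree G D \<and> yield D = s"

fun sub :: "('n, 't, 'f) dtree \<Rightarrow> nat list \<Rightarrow> ('n, 't, 'f) dtree option" where
  "sub t [] = Some t"
| "sub (Node A x cs) (i # p) = (if i < length cs then sub (cs ! i) p else None)"
| "sub (Leaf w) (i # p) = None"

text \<open>Position in s of the first symbol of the yield of the node at an address.\<close>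
fun offset :: "('n, 't, 'f) dtree \<Rightarrow> nat list \<Rightarrow> nat" where
  "offset t [] = 0"
| "offset (Node A x cs) (i # p) = sum_list (map (length \<circ> yield) (take i cs)) + offset (cs ! i) p"
| "offset (Leaf w) (i # p) = 0"

definition is_internal :: "('n, 't, 'f) dtree \<Rightarrow> nat list \<Rightarrow> bool" where
  "is_internal D v \<longleftrightarrow> (\<exists>A x cs. sub D v = Some (Node A x cs))"

fun nt_of :: "('n, 't, 'f) dtree \<Rightarrow> 'n" where
  "nt_of (Node A x cs) = A"

fun stk_of :: "('n, 't, 'f) dtree \<Rightarrow> 'f list" where
  "stk_of (Node A x cs) = x"

definition sigma :: "('n, 't, 'f) dtree \<Rightarrow> nat list \<Rightarrow> 'n" where
  "sigma D v = nt_of (the (sub D v))"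

definition eta :: "('n, 't, 'f) dtree \<Rightarrow> nat list \<Rightarrow> nat" where
  "eta D v = length (stk_of (the (sub D v)))"

definition leaf_marked :: "('n, 't, 'f) dtree \<Rightarrow> nat set \<Rightarrow> nat list \<Rightarrow> bool" where
  "leaf_marked D M v \<longleftrightarrow> (\<exists>w. sub D v = Some (Leaf w) \<and>
      (\<exists>i\<in>M. offset D v \<le> i \<and> i < offset D v + length w))"

definition marked :: "('n, 't, 'f) dtree \<Rightarrow> nat set \<Rightarrow> nat list \<Rightarrow> bool" where
  "marked D M v \<longleftrightarrow> (\<exists>q. leaf_marked D M (v @ q))"

definition branch :: "('n, 't, 'f) dtree \<Rightarrow> nat set \<Rightarrow> nat list \<Rightarrow> bool" where
  "branch D M v \<longleftrightarrow> card {i. marked D M (v @ [i])} > 1"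

definition scope :: "('n, 't, 'f) dtree \<Rightarrow> nat list \<Rightarrow> nat list set" where
  "scope D v = {v @ q | q. is_internal D (v @ q) \<and>
                 (\<forall>k\<le>length q. eta D (v @ take k q) \<ge> eta D v)}"

definition beta :: "('n, 't, 'f) dtree \<Rightarrow> nat list \<Rightarrow> nat list set" where
  "beta D v = {v' \<in> scope D v. \<forall>i. v' @ [i] \<notin> scope D v}"

definition tau :: "('n, 't, 'f) igrammar \<Rightarrow> ('n, 't, 'f) dtree \<Rightarrow> nat set \<Rightarrow> nat list
                    \<Rightarrow> 'n set \<times> 'n set \<times> 'n set" where
  "tau G D M v =
     ({A \<in> nts G. \<forall>v'\<in>beta D v. sigma D v' \<noteq> A},
      {A \<in> nts G. (\<exists>v'\<in>beta D v. sigma D v' = A) \<and> (\<forall>v'\<in>beta D v. marked D M v' \<longrightarrow> sigma D v' \<noteq> A)},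
      {A \<in> nts G. \<exists>v'\<in>beta D v. marked D M v' \<and> sigma D v' = A})"

end

theory Submission
  imports Defs "HOL-Library.FuncSet"
begin

definition pp :: "(nat \<Rightarrow> nat) \<Rightarrow> nat \<Rightarrow> nat \<Rightarrow> nat" where
  "pp h m i = (LEAST j. i \<le> j \<and> (j = m \<or> h (Suc j) < h i))"

lemma pp_basic:
  assumes "i \<le> m"
  shows "i \<le> pp h m i" "pp h m i \<le> m" "pp h m i = m \<or> h (Suc (pp h m i)) < h i"
    "\<And>k. i \<le> k \<Longrightarrow> k < pp h m i \<Longrightarrow> k \<noteq> m \<and> \<not> h (Suc k) < h i"
proof -
  have ex: "i \<le> m \<and> (m = m \<or> h (Suc m) < h i)" using assms by simp
  have L: "i \<le> pp h m i \<and> (pp h m i = m \<or> h (Suc (pp h m i)) < h i)"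
    unfolding pp_def by (rule LeastI[of _ m]) (use ex in auto)
  then show "i \<le> pp h m i" "pp h m i = m \<or> h (Suc (pp h m i)) < h i" by auto
  show "pp h m i \<le> m" unfolding pp_def by (rule Least_le) (use ex in auto)
  fix k assume "i \<le> k" "k < pp h m i"
  then show "k \<noteq> m \<and> \<not> h (Suc k) < h i"
    using not_less_Least[of k "\<lambda>j. i \<le> j \<and> (j = m \<or> h (Suc j) < h i)"] unfolding pp_def by auto
qed

lemma pp_ge:
  assumes "i \<le> m" "i \<le> k" "k \<le> pp h m i"
  shows "h i \<le> h k"
proof (cases "k = i")
  case False
  then obtain k' where "k = Suc k'" "i \<le> k'" "k' < pp h m i" using assms by (cases k) auto
  then show ?thesis using pp_basic(4)[OF assms(1), where h=h] by force
qed simp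

lemma pp_nest:
  assumes "i \<le> m" "i \<le> j" "j \<le> pp h m i"
  shows "pp h m j \<le> pp h m i"
proof -
  have "h i \<le> h j" using pp_ge assms by blast
  then have "j \<le> pp h m i \<and> (pp h m i = m \<or> h (Suc (pp h m i)) < h j)"
    using pp_basic(3)[OF assms(1), of h] assms by auto
  then show ?thesis unfolding pp_def[of h m j] by (rule Least_le)
qed

lemma pp_next:
  assumes st: "\<And>k. k < m \<Longrightarrow> h (Suc k) \<le> Suc (h k)"
    and "i \<le> m" "i < pp h m i" "pp h m (Suc i) < pp h m i"
  shows "Suc (pp h m (Suc i)) \<le> pp h m i" "pp h m (Suc (pp h m (Suc i))) = pp h m i"
proof -
  define q where "q = pp h m (Suc i)"
  have pm: "pp h m i \<le> m" using pp_basic(2)[OF assms(2)] .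
  have si: "Suc i \<le> m" using assms pm by simp
  have q1: "Suc i \<le> q" "q < pp h m i" using pp_basic(1)[OF si] assms(4) unfolding q_def by auto
  have "q = m \<or> h (Suc q) < h (Suc i)" using pp_basic(3)[OF si] unfolding q_def .
  then have hq: "h (Suc q) < h (Suc i)" using q1 pm by auto
  have "\<not> h (Suc q) < h i" using pp_basic(4)[OF assms(2), of q] q1 by auto
  moreover have "h (Suc i) \<le> Suc (h i)" using st si by simp
  ultimately have hz: "h (Suc q) = h i" using hq by simp
  show "Suc q \<le> pp h m i" using q1 by simp
  then show "pp h m (Suc q) = pp h m i"
  proof -
    have z: "Suc q \<le> m" using q1 pm by simp
    have a: "pp h m (Suc q) \<le> pp h m i"
      unfolding pp_def[of h m "Suc q"] apply (rule Least_le)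
      using pp_basic(3)[OF assms(2), of h] hz q1 by auto
    have b: "\<not> pp h m (Suc q) < pp h m i"
    proof
      assume c: "pp h m (Suc q) < pp h m i"
      have "i \<le> pp h m (Suc q)" using pp_basic(1)[OF z, of h] q1 by simp
      then have "pp h m (Suc q) \<noteq> m \<and> \<not> h (Suc (pp h m (Suc q))) < h i"
        using pp_basic(4)[OF assms(2)] c by blast
      then show False using pp_basic(3)[OF z, of h] hz by simp
    qed
    show ?thesis using a b by simp
  qed
qed

context
  fixes h :: "nat \<Rightarrow> nat" and m :: nat and Br :: "nat set"
  assumes st: "\<And>k. k < m \<Longrightarrow> h (Suc k) \<le> Suc (h k)"
begin

definition ff :: "nat \<Rightarrow> nat" where "ff x = card (Br \<inter> {x..<pp h m x})"

definition okp :: "nat \<Rightarrow> nat \<Rightarrow> bool" where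
  "okp u w \<longleftrightarrow> u < w \<and> pp h m w \<le> pp h m u \<and>
      (\<exists>i\<in>Br. (u \<le> i \<and> i < w) \<or> (pp h m w \<le> i \<and> i < pp h m u))"

lemma decomp:
  assumes "i \<le> m" "i < pp h m i"
  shows "ff i \<le> 2 + ff (Suc i) + card (Br \<inter> {Suc (pp h m (Suc i))..<pp h m i})"
proof -
  let ?q = "pp h m (Suc i)"
  have "{i..<pp h m i} \<subseteq> {i} \<union> {Suc i..<?q} \<union> {?q} \<union> {Suc ?q..<pp h m i}" by auto
  then have "Br \<inter> {i..<pp h m i} \<subseteq> {i} \<union> (Br \<inter> {Suc i..<?q}) \<union> {?q} \<union> (Br \<inter> {Suc ?q..<pp h m i})"
    by auto
  then have "ff i \<le> card ({i} \<union> (Br \<inter> {Suc i..<?q}) \<union> {?q} \<union> (Br \<inter> {Suc ?q..<pp h m i}))"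
    unfolding ff_def by (intro card_mono) auto
  also have "\<dots> \<le> card ({i} \<union> (Br \<inter> {Suc i..<?q}) \<union> {?q}) + card (Br \<inter> {Suc ?q..<pp h m i})"
    by (rule card_Un_le)
  also have "card ({i} \<union> (Br \<inter> {Suc i..<?q}) \<union> {?q}) \<le> card ({i} \<union> (Br \<inter> {Suc i..<?q})) + card {?q}"
    by (rule card_Un_le)
  also have "card ({i} \<union> (Br \<inter> {Suc i..<?q})) \<le> card {i} + card (Br \<inter> {Suc i..<?q})"
    by (rule card_Un_le)
  finally show ?thesis unfolding ff_def by simp
qed

lemma step:
  assumes "x \<le> m" "2 * F + 2 \<le> ff x"
  shows "\<exists>y z. x \<le> y \<and> y < pp h m y \<and> pp h m y \<le> pp h m x \<and> y < z \<and> z \<le> m \<and> z \<le> pp h m y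
     \<and> pp h m z \<le> pp h m y \<and> F \<le> ff z
     \<and> (\<exists>i\<in>Br. (y \<le> i \<and> i < z) \<or> (pp h m z \<le> i \<and> i < pp h m y))"
proof -
  define Z where "Z = {y. y \<le> m \<and> x \<le> y \<and> pp h m y \<le> pp h m x \<and> 2 * F + 2 \<le> ff y}"
  have fZ: "finite Z" unfolding Z_def by auto
  have xZ: "x \<in> Z" unfolding Z_def using assms by auto
  define y where "y = Max Z"
  have yZ: "y \<in> Z" unfolding y_def using fZ xZ Max_in by blast
  have ymax: "\<And>z. z \<in> Z \<Longrightarrow> z \<le> y" unfolding y_def using fZ by simp
  have ym: "y \<le> m" "x \<le> y" "pp h m y \<le> pp h m x" "2 * F + 2 \<le> ff y" using yZ unfolding Z_def by auto
  have ylt: "y < pp h m y"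
  proof (rule ccontr)
    assume "\<not> y < pp h m y"
    then have "ff y = 0" unfolding ff_def by simp
    then show False using ym by simp
  qed
  have pym: "pp h m y \<le> m" using pp_basic(2)[OF ym(1)] .
  have notZ: "\<And>z. y < z \<Longrightarrow> z \<le> m \<Longrightarrow> pp h m z \<le> pp h m y \<Longrightarrow> ff z < 2 * F + 2"
  proof -
    fix z assume a: "y < z" "z \<le> m" "pp h m z \<le> pp h m y"
    have "z \<notin> Z" using ymax a by force
    then show "ff z < 2 * F + 2" unfolding Z_def using a ym by auto
  qed
  have cand: "\<exists>z. y < z \<and> z \<le> m \<and> z \<le> pp h m y \<and> pp h m z \<le> pp h m y \<and> F \<le> ff z"
  proof -
    let ?q = "pp h m (Suc y)"
    let ?g = "card (Br \<inter> {Suc ?q..<pp h m y})"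
    have d: "ff y \<le> 2 + ff (Suc y) + ?g" using decomp ym(1) ylt by blast
    have c1: "Suc y \<le> m" "Suc y \<le> pp h m y" "pp h m (Suc y) \<le> pp h m y"
      using ylt pym pp_nest[OF ym(1), of "Suc y"] by auto
    show ?thesis
    proof (cases "?g \<le> ff (Suc y)")
      case True
      then have "F \<le> ff (Suc y)" using d ym(4) by simp
      then show ?thesis using c1 by (intro exI[of _ "Suc y"]) auto
    next
      case False
      then have "?g > 0" by simp
      then have "?q < pp h m y" by (cases "?q < pp h m y") auto
      note nx = pp_next[OF st ym(1) ylt this]
      have "ff (Suc ?q) = ?g" using nx(2) unfolding ff_def by simp
      then have "F \<le> ff (Suc ?q)" using d ym(4) False by simp
      moreover have "Suc y \<le> ?q" using pp_basic(1)[OF c1(1), where h=h] .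
      ultimately show ?thesis using nx pym c1 by (intro exI[of _ "Suc ?q"]) auto
    qed
  qed
  then obtain z where z: "y < z" "z \<le> m" "z \<le> pp h m y" "pp h m z \<le> pp h m y" "F \<le> ff z" by blast
  have "ff z < ff y" using notZ z ym by fastforce
  then have "\<not> Br \<inter> {y..<pp h m y} \<subseteq> Br \<inter> {z..<pp h m z}"
    unfolding ff_def by (metis card_mono finite_Int finite_atLeastLessThan leD)
  then obtain i where "i \<in> Br" "y \<le> i" "i < pp h m y" "\<not> (z \<le> i \<and> i < pp h m z)"
    by (meson IntD1 IntD2 IntI atLeastLessThan_iff subsetI)
  then have "\<exists>i\<in>Br. (y \<le> i \<and> i < z) \<or> (pp h m z \<le> i \<and> i < pp h m y)" by auto
  then show ?thesis using ym ylt z by blast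
qed

lemma chain:
  "x \<le> m \<Longrightarrow> 4 ^ L \<le> ff x \<Longrightarrow> \<exists>ws. length ws = L \<and>
     (\<forall>w\<in>set ws. x \<le> w \<and> w < pp h m w \<and> pp h m w \<le> pp h m x \<and> w \<le> m) \<and>
     (\<forall>a b. a < b \<longrightarrow> b < length ws \<longrightarrow> okp (ws ! a) (ws ! b))"
proof (induction L arbitrary: x)
  case 0
  then show ?case by auto
next
  case (Suc L)
  have "2 * 4 ^ L + 2 \<le> (4::nat) ^ Suc L"
    using one_le_power[of "4::nat" L] by simp
  then have "2 * 4 ^ L + 2 \<le> ff x" using Suc.prems by linarith
  then obtain y z where yz: "x \<le> y" "y < pp h m y" "pp h m y \<le> pp h m x" "y < z" "z \<le> m" "z \<le> pp h m y"
     "pp h m z \<le> pp h m y" "4 ^ L \<le> ff z"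
     and br: "\<exists>i\<in>Br. (y \<le> i \<and> i < z) \<or> (pp h m z \<le> i \<and> i < pp h m y)"
    using step[OF Suc.prems(1)] by blast
  obtain ws where ws: "length ws = L"
     "\<forall>w\<in>set ws. z \<le> w \<and> w < pp h m w \<and> pp h m w \<le> pp h m z \<and> w \<le> m"
     "\<forall>a b. a < b \<longrightarrow> b < length ws \<longrightarrow> okp (ws ! a) (ws ! b)"
    using Suc.IH[OF yz(5) yz(8)] by blast
  have ym: "y \<le> m" using yz pp_basic(2)[OF Suc.prems(1), of h] by simp
  have oky: "\<And>w. w \<in> set ws \<Longrightarrow> okp y w"
  proof -
    fix w assume "w \<in> set ws"
    then have zw: "z \<le> w" "pp h m w \<le> pp h m z" using ws(2) by auto
    from br obtain i where "i \<in> Br" "(y \<le> i \<and> i < z) \<or> (pp h m z \<le> i \<and> i < pp h m y)" by blast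
    then have "\<exists>i\<in>Br. (y \<le> i \<and> i < w) \<or> (pp h m w \<le> i \<and> i < pp h m y)"
      using zw by (intro bexI[of _ i]) auto
    then show "okp y w" unfolding okp_def using yz zw by auto
  qed
  show ?case
  proof (intro exI[of _ "y # ws"] conjI allI impI)
    show "length (y # ws) = Suc L" using ws by simp
    show "\<forall>w\<in>set (y # ws). x \<le> w \<and> w < pp h m w \<and> pp h m w \<le> pp h m x \<and> w \<le> m"
      using ws(2) yz ym by fastforce
    fix a b assume ab: "a < b" "b < length (y # ws)"
    then obtain b' where b': "b = Suc b'" "b' < length ws" by (cases b) auto
    show "okp ((y # ws) ! a) ((y # ws) ! b)"
    proof (cases a)
      case 0
      then show ?thesis using b' oky by simp
    next
      case (Suc a')
      then show ?thesis using b' ab ws(3) by simp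
    qed
  qed
qed

lemma abstract_main:
  assumes "finite C" "\<And>i. i \<le> m \<Longrightarrow> col i \<in> C" "card C < L" "4 ^ L \<le> ff 0"
  shows "\<exists>b1 t1. okp b1 t1 \<and> t1 < pp h m t1 \<and> t1 \<le> m \<and> b1 \<le> m \<and> col b1 = col t1"
proof -
  obtain ws where ws: "length ws = L"
     "\<forall>w\<in>set ws. 0 \<le> w \<and> w < pp h m w \<and> pp h m w \<le> pp h m 0 \<and> w \<le> m"
     "\<forall>a b. a < b \<longrightarrow> b < length ws \<longrightarrow> okp (ws ! a) (ws ! b)"
    using chain[of 0 L] assms(4) by auto
  have "set (map col ws) \<subseteq> C" using ws(2) assms(2) by auto
  then have "card (set (map col ws)) \<le> card C" using assms(1) card_mono by blast
  then have "\<not> distinct (map col ws)" using distinct_card[of "map col ws"] ws(1) assms(3) by auto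
  then obtain a b where ab: "a < length ws" "b < length ws" "a \<noteq> b" "col (ws ! a) = col (ws ! b)"
    unfolding distinct_conv_nth by auto
  show ?thesis
  proof (cases "a < b")
    case True
    then show ?thesis using ab ws by (intro exI[of _ "ws ! a"] exI[of _ "ws ! b"]) auto
  next
    case False
    then have "b < a" using ab by simp
    then show ?thesis using ab ws by (intro exI[of _ "ws ! b"] exI[of _ "ws ! a"]) auto
  qed
qed

end


lemma sub_append: "sub t (a @ b) = (case sub t a of None \<Rightarrow> None | Some u \<Rightarrow> sub u b)"
  by (induction t a rule: sub.induct) auto

lemma valid_sub: "valid_tree G t \<Longrightarrow> sub t a = Some u \<Longrightarrow> valid_tree G u"
  by (induction t a arbitrary: u rule: sub.induct) (auto split: if_splits)

lemma child_sub: "sub D v = Some (Node A x cs) \<Longrightarrow> sub D (v @ [c]) = Some u \<Longrightarrow> c < length cs \<and> cs ! c = u"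
  by (simp add: sub_append split: if_splits)

lemma internal_prefix:
  assumes "sub D ps = Some (Node A x cs)" "i \<le> length ps"
  shows "\<exists>B y cs'. sub D (take i ps) = Some (Node B y cs')"
proof -
  have e0: "sub D (take i ps @ drop i ps) = Some (Node A x cs)" using assms by simp
  have e: "(case sub D (take i ps) of None \<Rightarrow> None | Some u \<Rightarrow> sub u (drop i ps)) = Some (Node A x cs)"
    using e0 by (simp only: sub_append)
  show ?thesis
  proof (cases "sub D (take i ps)")
    case None
    then show ?thesis using e by simp
  next
    case (Some u)
    show ?thesis
    proof (cases u)
      case (Leaf w)
      then show ?thesis using e Some by (cases "drop i ps") auto
    qed (use Some in auto)
  qed
qed

lemma map_lab_nodes:
  assumes "map lab cs = map (\<lambda>C. Inl (C, y)) bs" "c \<in> set cs"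
  shows "\<exists>B cs'. c = Node B y cs'"
proof -
  have "lab c \<in> set (map lab cs)" using assms(2) by simp
  then have "lab c \<in> set (map (\<lambda>C. Inl (C, y)) bs)" using assms(1) by simp
  then obtain C where "lab c = Inl (C, y)" by auto
  then show ?thesis by (cases c) auto
qed

lemma map_lab_leaf:
  assumes "\<exists>w. map lab cs = [Inr w]" "c \<in> set cs"
  shows "\<exists>w. c = Leaf w"
proof -
  obtain w where w: "map lab cs = [Inr w]" using assms(1) by (elim exE)
  have "lab c \<in> set (map lab cs)" using assms(2) by simp
  then have "lab c = Inr w" using w by simp
  then show ?thesis by (cases c) auto
qed

lemma children:
  assumes "applies p A x cs"
  shows "(\<exists>y. length y \<le> Suc (length x) \<and> length x \<le> Suc (length y) \<and> (\<forall>c\<in>set cs. \<exists>B cs'. c = Node B y cs'))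
     \<or> (\<forall>c\<in>set cs. \<exists>w. c = Leaf w)"
proof (cases p)
  case (PRule B r)
  then obtain bs where "map lab cs = map (\<lambda>C. Inl (C, x)) bs" using assms by auto
  then have "\<forall>c\<in>set cs. \<exists>B cs'. c = Node B x cs'" using map_lab_nodes by blast
  then show ?thesis by (intro disjI1 exI[of _ x]) auto
next
  case (PPush B C f)
  then have "map lab cs = map (\<lambda>C. Inl (C, f # x)) [C]" using assms by auto
  then have "\<forall>c\<in>set cs. \<exists>B cs'. c = Node B (f # x) cs'" using map_lab_nodes by blast
  then show ?thesis by (intro disjI1 exI[of _ "f # x"]) auto
next
  case (PPop B f r)
  then have "(\<exists>y bs. x = f # y \<and> map lab cs = map (\<lambda>C. Inl (C, y)) bs)
     \<or> (\<exists>w. map lab cs = [Inr w])" using assms by auto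
  then show ?thesis
  proof
    assume "\<exists>y bs. x = f # y \<and> map lab cs = map (\<lambda>C. Inl (C, y)) bs"
    then obtain y bs where "x = f # y" "map lab cs = map (\<lambda>C. Inl (C, y)) bs" by blast
    then show ?thesis using map_lab_nodes by (intro disjI1 exI[of _ y]) auto
  next
    assume aw: "\<exists>w. map lab cs = [Inr w]"
    have "\<forall>c\<in>set cs. \<exists>w. c = Leaf w"
    proof
      fix c assume "c \<in> set cs"
      then show "\<exists>w. c = Leaf w" by (rule map_lab_leaf[OF aw])
    qed
    then show ?thesis by (rule disjI2)
  qed
qed

lemma valid_children:
  assumes "valid_tree G (Node A x cs)"
  shows "(\<exists>y. length y \<le> Suc (length x) \<and> length x \<le> Suc (length y) \<and> (\<forall>c\<in>set cs. \<exists>B cs'. c = Node B y cs'))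
     \<or> (\<forall>c\<in>set cs. \<exists>w. c = Leaf w)"
proof -
  obtain p where "applies p A x cs" using assms by auto
  then show ?thesis by (rule children)
qed

lemma nt_in:
  assumes "igrammar G" "valid_tree G (Node A x cs)"
  shows "A \<in> nts G"
proof -
  obtain p where p: "p \<in> prods G" "applies p A x cs" using assms(2) by auto
  have "prod_ok G p" using p(1) assms(1) unfolding igrammar_def by auto
  then show ?thesis using p(2) by (cases p) auto
qed

definition TT :: "'a set \<Rightarrow> ('a set \<times> 'a set \<times> 'a set) set" where
  "TT N = {(X, Y, Z). X \<union> Y \<union> Z = N \<and> X \<inter> Y = {} \<and> X \<inter> Z = {} \<and> Y \<inter> Z = {}}"

lemma finite_TT: "finite N \<Longrightarrow> finite (TT N)"
  by (rule finite_subset[of _ "Pow N \<times> Pow N \<times> Pow N"]) (auto simp: TT_def)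

lemma card_TT:
  assumes "finite N"
  shows "card (TT N) \<le> 3 ^ card N"
proof -
  define g where "g = (\<lambda>(X, Y, Z::'a set). restrict (\<lambda>a. if a \<in> X then 0 else if a \<in> Y then 1 else (2::nat)) N)"
  have rec: "X = {a\<in>N. g (X,Y,Z) a = 0} \<and> Y = {a\<in>N. g (X,Y,Z) a = 1} \<and> Z = {a\<in>N. g (X,Y,Z) a = 2}"
    if "(X, Y, Z) \<in> TT N" for X Y Z
    using that unfolding TT_def g_def by (auto simp: disjoint_iff split: if_splits)
  have inj: "inj_on g (TT N)"
  proof (rule inj_onI)
    fix t t' assume a: "t \<in> TT N" "t' \<in> TT N" "g t = g t'"
    obtain X Y Z where t: "t = (X, Y, Z)" by (cases t) auto
    obtain X' Y' Z' where t': "t' = (X', Y', Z')" by (cases t') auto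
    show "t = t'" using rec[of X Y Z] rec[of X' Y' Z'] a unfolding t t' by auto
  qed
  have sub: "g ` TT N \<subseteq> PiE N (\<lambda>_. {0, 1, 2})" unfolding g_def by (auto split: if_splits)
  have "card (TT N) \<le> card (PiE N (\<lambda>_. {0, 1, 2::nat}))"
    using card_inj_on_le[OF inj sub] assms by (simp add: finite_PiE)
  also have "\<dots> = 3 ^ card N" using assms by (simp add: card_PiE numeral_3_eq_3)
  finally show ?thesis .
qed


theorem lemma1:
  fixes G :: "('n, 't, 'f) igrammar" and D :: "('n, 't, 'f) dtree"
    and s :: "'t list" and M :: "nat set" and ps :: "nat list"
  assumes "igrammar G" and "grounded G"
    and "deriv_tree G D s"
    and "M \<subseteq> {..<length s}"
    and "is_internal D ps" and "\<exists>j w. sub D (ps @ [j]) = Some (Leaf w)"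
    and "card {i. i \<le> length ps \<and> branch D M (take i ps)}
           > (card (nts G) * 3 ^ card (nts G)) ^ (card (nts G) ^ 2 * 3 ^ card (nts G) + 1)"
  shows "\<exists>b1 t1 t2 b2. b1 < t1 \<and> t1 < t2 \<and> t2 \<le> b2 \<and> b2 \<le> length ps
     \<and> sigma D (take b1 ps) = sigma D (take t1 ps)
     \<and> sigma D (take t2 ps) = sigma D (take b2 ps)
     \<and> take b2 ps \<in> beta D (take b1 ps)
     \<and> take t2 ps \<in> beta D (take t1 ps)
     \<and> tau G D M (take b1 ps) = tau G D M (take t1 ps)
     \<and> (\<exists>i. ((b1 \<le> i \<and> i < t1) \<or> (t2 \<le> i \<and> i < b2)) \<and> branch D M (take i ps))"
proof -
  define m where "m = length ps"
  define N where "N = nts G"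
  define n where "n = card N"
  define h where "h = (\<lambda>i. eta D (take i ps))"
  define Br where "Br = {i. i \<le> length ps \<and> branch D M (take i ps)}"
  have finN: "finite N" using assms(1) unfolding igrammar_def N_def by auto
  obtain cs0 where D0: "D = Node (start G) [] cs0" and vD: "valid_tree G D"
    using assms(3) unfolding deriv_tree_def by auto
  obtain Ap xp csp where Dps: "sub D ps = Some (Node Ap xp csp)"
    using assms(5) unfolding is_internal_def by auto
  have nodes: "\<exists>A x cs. sub D (take i ps) = Some (Node A x cs)" if "i \<le> m" for i
    using internal_prefix[OF Dps] that unfolding m_def by auto
  have vnode: "valid_tree G u" if "sub D v = Some u" for v u
    using valid_sub[OF vD that] .
  have hstep: "h (Suc k) \<le> Suc (h k) \<and> h k \<le> Suc (h (Suc k))" if km: "k < m" for k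
  proof -
    obtain A x cs where a: "sub D (take k ps) = Some (Node A x cs)" using nodes km by fastforce
    obtain B y cs' where b: "sub D (take (Suc k) ps) = Some (Node B y cs')" using nodes km by fastforce
    have "take (Suc k) ps = take k ps @ [ps ! k]" using km unfolding m_def by (simp add: take_Suc_conv_app_nth)
    then have c: "ps ! k < length cs \<and> cs ! (ps ! k) = Node B y cs'" using child_sub[OF a] b by simp
    then have cin: "Node B y cs' \<in> set cs" by (metis nth_mem)
    have "(\<exists>y. length y \<le> Suc (length x) \<and> length x \<le> Suc (length y) \<and> (\<forall>c\<in>set cs. \<exists>B cs'. c = Node B y cs'))
     \<or> (\<forall>c\<in>set cs. \<exists>w. c = Leaf w)" by (rule valid_children[OF vnode[OF a]])
    then obtain y' where "length y' \<le> Suc (length x)" "length x \<le> Suc (length y')"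
       "\<forall>c\<in>set cs. \<exists>B cs'. c = Node B y' cs'" using cin by fastforce
    then have "y = y'" "length y \<le> Suc (length x)" "length x \<le> Suc (length y)" using cin by fastforce+
    then show ?thesis unfolding h_def eta_def using a b by simp
  qed
  have st: "\<And>k. k < m \<Longrightarrow> h (Suc k) \<le> Suc (h k)" using hstep by blast
  have st2: "\<And>k. k < m \<Longrightarrow> h k \<le> Suc (h (Suc k))" using hstep by blast
  let ?p = "pp h m"
  have h0: "h 0 = 0" unfolding h_def eta_def using D0 by simp
  have p0: "?p 0 = m"
  proof -
    have "?p 0 = m \<or> h (Suc (?p 0)) < h 0" using pp_basic(3)[of 0 m h] by simp
    then show ?thesis using h0 by simp
  qed
  have beta_pp: "take (?p i) ps \<in> beta D (take i ps)" if im: "i \<le> m" for i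
  proof -
    define k where "k = ?p i"
    have ik: "i \<le> k" "k \<le> m" using pp_basic(1,2)[OF im, of h] unfolding k_def by auto
    define q where "q = drop i (take k ps)"
    have tq: "take i ps @ q = take k ps"
    proof -
      have "take i ps = take i (take k ps)" using ik by (simp add: min_def)
      then show ?thesis unfolding q_def by (metis append_take_drop_id)
    qed
    have lq: "length q = k - i" unfolding q_def using ik m_def by simp
    have scope: "take k ps \<in> scope D (take i ps)"
      unfolding scope_def
    proof (intro CollectI exI conjI)
      show "take k ps = take i ps @ q" using tq by simp
      show "is_internal D (take i ps @ q)" using tq nodes[OF ik(2)] unfolding is_internal_def by simp
      show "\<forall>k'\<le>length q. eta D (take i ps) \<le> eta D (take i ps @ take k' q)"
      proof (intro allI impI)
        fix k' assume k': "k' \<le> length q"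
        have e1: "take k' q = drop i (take (i + k') ps)"
          unfolding q_def using ik k' lq by (simp add: take_drop min_def add.commute)
        have e2: "take i ps = take i (take (i + k') ps)" by (simp add: min_def)
        have "take i ps @ take k' q = take (i + k') ps" unfolding e1 using e2 by (metis append_take_drop_id)
        moreover have "h i \<le> h (i + k')" using pp_ge[OF im, of "i + k'" h] k' lq ik unfolding k_def by simp
        ultimately show "eta D (take i ps) \<le> eta D (take i ps @ take k' q)" unfolding h_def by simp
      qed
    qed
    have notsc: "take k ps @ [c] \<notin> scope D (take i ps)" for c
    proof
      assume "take k ps @ [c] \<in> scope D (take i ps)"
      then obtain q' where q': "take k ps @ [c] = take i ps @ q'" "is_internal D (take i ps @ q')"
         "\<forall>k'\<le>length q'. eta D (take i ps) \<le> eta D (take i ps @ take k' q')"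
        unfolding scope_def by blast
      have int: "is_internal D (take k ps @ [c])" using q' by simp
      have ge: "h i \<le> eta D (take k ps @ [c])" using q'(3)[rule_format, of "length q'"] q'(1) unfolding h_def by simp
      obtain A x cs where a: "sub D (take k ps) = Some (Node A x cs)" using nodes ik by blast
      obtain B z cs2 where b: "sub D (take k ps @ [c]) = Some (Node B z cs2)" using int unfolding is_internal_def by blast
      have cb: "c < length cs \<and> cs ! c = Node B z cs2" using child_sub[OF a b] .
      then have cin: "Node B z cs2 \<in> set cs" by (metis nth_mem)
      have ch: "(\<exists>y. length y \<le> Suc (length x) \<and> length x \<le> Suc (length y) \<and> (\<forall>c\<in>set cs. \<exists>B cs'. c = Node B y cs'))
         \<or> (\<forall>c\<in>set cs. \<exists>w. c = Leaf w)" by (rule valid_children[OF vnode[OF a]])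
      then obtain y' where y': "\<forall>c\<in>set cs. \<exists>B cs'. c = Node B y' cs'" using cin by fastforce
      have zy: "z = y'" using y' cin by fastforce
      show False
      proof (cases "k = m")
        case True
        obtain j w where jw: "sub D (ps @ [j]) = Some (Leaf w)" using assms(6) by blast
        have "take k ps = ps" using True m_def by simp
        then have "j < length cs \<and> cs ! j = Leaf w" using child_sub[OF _ jw] a by simp
        then have "Leaf w \<in> set cs" by (metis nth_mem)
        then show False using y' by fastforce
      next
        case False
        then have km: "k < m" using ik by simp
        have lt: "h (Suc k) < h i" using pp_basic(3)[OF im, of h] False unfolding k_def by simp
        obtain B' y cs' where b': "sub D (take (Suc k) ps) = Some (Node B' y cs')" using nodes km by fastforce
        have "take (Suc k) ps = take k ps @ [ps ! k]" using km unfolding m_def by (simp add: take_Suc_conv_app_nth)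
        then have "ps ! k < length cs \<and> cs ! (ps ! k) = Node B' y cs'" using child_sub[OF a] b' by simp
        then have "Node B' y cs' \<in> set cs" by (metis nth_mem)
        then have "y = y'" using y' by fastforce
        then have "h (Suc k) = eta D (take k ps @ [c])" unfolding h_def eta_def using b b' zy by simp
        then show False using lt ge by simp
      qed
    qed
    show ?thesis unfolding beta_def k_def[symmetric] using scope notsc by blast
  qed
  have sig: "sigma D (take i ps) \<in> N" if im: "i \<le> m" for i
  proof -
    obtain A x cs where a: "sub D (take i ps) = Some (Node A x cs)" using nodes im by blast
    then show ?thesis unfolding sigma_def N_def using nt_in[OF assms(1) vnode[OF a]] by simp
  qed
  have tauT: "tau G D M v \<in> TT N" for v
    unfolding tau_def TT_def N_def by auto
  define C where "C = N \<times> N \<times> TT N"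
  define col where "col = (\<lambda>i. (sigma D (take i ps), sigma D (take (?p i) ps), tau G D M (take i ps)))"
  have finC: "finite C" unfolding C_def using finN finite_TT[OF finN] by simp
  have colC: "col i \<in> C" if "i \<le> m" for i
    unfolding col_def C_def using sig[OF that] sig[OF pp_basic(2)[OF that, of h]] tauT by simp
  have cardC: "card C \<le> n ^ 2 * 3 ^ n"
  proof -
    have "card C = n * (n * card (TT N))" unfolding C_def n_def by (simp add: card_cartesian_product)
    also have "\<dots> \<le> n * (n * 3 ^ n)" using card_TT[OF finN] unfolding n_def by simp
    finally show ?thesis by (simp add: power2_eq_square)
  qed
  obtain d where gd: "grounded_with G d" using assms(2) unfolding grounded_def by blast
  obtain pr0 where pr0: "pr0 \<in> prods G" "applies pr0 (start G) [] cs0" using vD D0 by auto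
  have "\<exists>A. A \<in> nts G - {start G}" using gd pr0(1) unfolding grounded_with_def by blast
  then obtain A0 where A0: "A0 \<in> N" "A0 \<noteq> start G" unfolding N_def by blast
  have "start G \<in> N" using assms(1) unfolding igrammar_def N_def by simp
  then have "card {start G, A0} \<le> n" unfolding n_def using A0 finN by (intro card_mono) auto
  then have n2: "2 \<le> n" using A0 by simp
  have "(3::nat) ^ 1 \<le> 3 ^ n" using n2 by (intro power_increasing) auto
  then have c4: "4 \<le> n * 3 ^ n" using n2 mult_le_mono[of 2 n 3 "3 ^ n"] by simp
  define L where "L = n ^ 2 * 3 ^ n + 1"
  have "card C < L" using cardC unfolding L_def by simp
  have BrC: "(n * 3 ^ n) ^ L < card Br" using assms(7) unfolding L_def Br_def n_def N_def .
  have "(4::nat) ^ L \<le> (n * 3 ^ n) ^ L" using c4 by (rule power_mono) simp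
  moreover have "card Br \<le> card (Br \<inter> {0..<m}) + 1"
  proof -
    have "Br \<subseteq> (Br \<inter> {0..<m}) \<union> {m}" unfolding Br_def m_def by auto
    then have "card Br \<le> card ((Br \<inter> {0..<m}) \<union> {m})" by (intro card_mono) auto
    also have "\<dots> \<le> card (Br \<inter> {0..<m}) + card {m}" by (rule card_Un_le)
    finally show ?thesis by simp
  qed
  moreover have "ff h m Br 0 = card (Br \<inter> {0..<m})" using p0 by (simp add: ff_def[of m h, OF st])
  ultimately have "4 ^ L \<le> ff h m Br 0" using BrC by simp
  then obtain b1 t1 where bt: "okp h m Br b1 t1" "t1 < ?p t1" "t1 \<le> m" "b1 \<le> m" "col b1 = col t1"
    using abstract_main[of m h C col L Br, OF st finC colC \<open>card C < L\<close>] by blast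
  have ok: "b1 < t1" "?p t1 \<le> ?p b1" "\<exists>i\<in>Br. (b1 \<le> i \<and> i < t1) \<or> (?p t1 \<le> i \<and> i < ?p b1)"
    using bt(1) okp_def[of m h Br b1 t1, OF st] by auto
  have pb: "?p b1 \<le> m" using pp_basic(2)[OF bt(4)] .
  have g1: "b1 < t1" "t1 < ?p t1" "?p t1 \<le> ?p b1" using ok bt by auto
  have g2: "?p b1 \<le> length ps" using pb m_def by simp
  have g3: "sigma D (take b1 ps) = sigma D (take t1 ps)" using bt(5) unfolding col_def by simp
  have g4: "sigma D (take (?p t1) ps) = sigma D (take (?p b1) ps)" using bt(5) unfolding col_def by simp
  have g5: "tau G D M (take b1 ps) = tau G D M (take t1 ps)" using bt(5) unfolding col_def by simp
  have g6: "take (?p b1) ps \<in> beta D (take b1 ps)" using beta_pp bt(4) by blast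
  have g7: "take (?p t1) ps \<in> beta D (take t1 ps)" using beta_pp bt(3) by blast
  have g8: "\<exists>i. (b1 \<le> i \<and> i < t1 \<or> ?p t1 \<le> i \<and> i < ?p b1) \<and> branch D M (take i ps)"
    using ok(3) unfolding Br_def by blast
  show ?thesis
    by (rule exI[of _ b1], rule exI[of _ t1], rule exI[of _ "?p t1"], rule exI[of _ "?p b1"])
      (use g1 g2 g3 g4 g5 g6 g7 g8 in blast)
qed

end
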